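(* (i) Let $J:\tilde{\mathcal{A}}_{\mathbf{k}_0}\to\tilde{\mathcal{A}}_{\mathbf{k}_0}$ be a linear map for which there are complex numbers $c_{\mathbf{j};\mathbf{p}}$ ($\mathbf{j}\ge\mathbf{k}_0$, $\mathbf{p}\in\mathbb{N}^M\setminus\{\mathbf 0\}$) such that for every $\tilde S\in\tilde{\mathcal{A}}_{\mathbf{k}_0}$ and every representation $\tilde S=\sum_{\mathbf{j}\ge\mathbf{k}_0}c_{\mathbf{j}}\mu_{\mathbf{j}}$ one has $J\tilde S=\sum_{\mathbf{j}\ge\mathbf{k}_0}c_{\mathbf{j}}\sum_{\mathbf{p}\in\mathbb{N}^M\setminus\{0\}}c_{\mathbf{j};\mathbf{p}}\mu_{\mathbf{j}+\mathbf{p}}$. Then for every $\tilde S_0\in\tilde{\mathcal{A}}_{\mathbf{k}_0}$ the equation $\tilde S=J\tilde S+\tilde S_0$ has a unique solution $\tilde S\in\tilde{\mathcal{A}}_{\mathbf{k}_0}$. (ii) Let $A\subset\tilde{\mathcal{A}}_{\mathbf{k}_0}$ be nonempty and closed in the asymptotic topology, and let $J:A\to A$ (linear or not) be asymptotically contractive on $A$. Then the equation $\tilde S=J(\tilde S)$ has a unique solution $\tilde S\in A$.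
   Context: $(\mathcal{G},\cdot,\le)$ is a totally ordered abelian group (order compatible with multiplication). Fix $M\ge1$, $\mu_1,\dots,\mu_M\in\mathcal{G}$ with $\mu_i<1$, $\mu_{\mathbf{k}}=\prod_i\mu_i^{k_i}$ for $\mathbf{k}\in\mathbb{Z}^M$; $\mathbb{Z}^M$ has the componentwise order. For $\mathbf{k}_0\in\mathbb{Z}^M$, $\tilde{\mathcal{A}}_{\mathbf{k}_0}$ is the set of formal sums $\sum_{\mathbf{k}\ge\mathbf{k}_0}c_{\mathbf{k}}\mu_{\mathbf{k}}$ ($c_{\mathbf{k}}\in\mathbb{C}$), two formal sums being identified iff for each $g\in\mathcal{G}$ the finite sums $\sum_{\mathbf{k}\ge\mathbf{k}_0,\mu_{\mathbf{k}}=g}c_{\mathbf{k}}$ coincide (the coefficient of $g$); addition is coefficientwise. A formal expression $\sum_{\mathbf{k}\ge\mathbf{k}_0}\sum_{\mathbf{p}\in\mathbb{N}^M\setminus\{0\}}a_{\mathbf{k},\mathbf{p}}\mu_{\mathbf{k}+\mathbf{p}}$ denotes the element whose coefficient of $g$ is the (finite) sum of $a_{\mathbf{k},\mathbf{p}}$ over $\mu_{\mathbf{k}+\mathbf{p}}=g$. Asymptotic topology: a sequence converges iff for each $g\in\mathcal{G}$ its coefficient of $g$ is eventually constant; closed means sequentially closed. A map $J:A\to A$ is asymptotically contractive on $A$ if for all $f_1,f_2\in A$ and every representation $f_1-f_2=\sum_{\mathbf{k}\ge\mathbf{k}_0}c_{\mathbf{k}}\mu_{\mathbf{k}}$ there exist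 complex numbers $C_{\mathbf{k};\mathbf{p}}$ ($\mathbf{k}\ge\mathbf{k}_0$, $\mathbf{p}\in\mathbb{N}^M\setminus\{0\}$), possibly depending on $f_1,f_2$, such that $J(f_1)-J(f_2)=\sum_{\mathbf{k}\ge\mathbf{k}_0}c_{\mathbf{k}}\sum_{\mathbf{p}\in\mathbb{N}^M\setminus\{0\}}C_{\mathbf{k};\mathbf{p}}\mu_{\mathbf{k}+\mathbf{p}}$. *)

theory Defs
  imports Complex_Main
begin

text \<open>The totally ordered abelian group is written additively (type class
  linordered_ab_group_add): the paper's product is our +, its unit 1 is our 0,
  and mu_k = prod mu_i^(k_i) becomes sum of k_i times mu_i.
  Indices: Z^M is 'i \<Rightarrow> int for a finite (nonempty) index type 'i,
  with the pointwise (componentwise) order on functions.\<close>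

definition zmul :: "int \<Rightarrow> 'g::ab_group_add \<Rightarrow> 'g" where
  "zmul n x = (if 0 \<le> n then (\<Sum>_\<in>{..<nat n}. x) else - (\<Sum>_\<in>{..<nat (- n)}. x))"

definition muk :: "('i::finite \<Rightarrow> 'g::linordered_ab_group_add) \<Rightarrow> ('i \<Rightarrow> int) \<Rightarrow> 'g" where
  "muk \<mu> k = (\<Sum>i\<in>UNIV. zmul (k i) (\<mu> i))"

definition fsum :: "('i::finite \<Rightarrow> 'g::linordered_ab_group_add) \<Rightarrow> ('i \<Rightarrow> int)
    \<Rightarrow> (('i \<Rightarrow> int) \<Rightarrow> complex) \<Rightarrow> 'g \<Rightarrow> complex" where
  "fsum \<mu> k0 c g = (\<Sum>k | k0 \<le> k \<and> muk \<mu> k = g. c k)"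

definition fsum2 :: "('i::finite \<Rightarrow> 'g::linordered_ab_group_add) \<Rightarrow> ('i \<Rightarrow> int)
    \<Rightarrow> (('i \<Rightarrow> int) \<Rightarrow> ('i \<Rightarrow> int) \<Rightarrow> complex) \<Rightarrow> 'g \<Rightarrow> complex" where
  "fsum2 \<mu> k0 a g = (\<Sum>(k, p) | k0 \<le> k \<and> (\<forall>i. 0 \<le> p i) \<and> (\<exists>i. p i \<noteq> 0) \<and> muk \<mu> (\<lambda>i. k i + p i) = g. a k p)"

definition Atilde :: "('i::finite \<Rightarrow> 'g::linordered_ab_group_add) \<Rightarrow> ('i \<Rightarrow> int)
    \<Rightarrow> ('g \<Rightarrow> complex) set" where
  "Atilde \<mu> k0 = {f. \<exists>c. f = fsum \<mu> k0 c}"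

definition asym_conv :: "(nat \<Rightarrow> 'g \<Rightarrow> complex) \<Rightarrow> ('g \<Rightarrow> complex) \<Rightarrow> bool" where
  "asym_conv F f \<longleftrightarrow> (\<forall>g. \<exists>N. \<forall>n\<ge>N. F n g = f g)"

definition asym_closed :: "('g \<Rightarrow> complex) set \<Rightarrow> bool" where
  "asym_closed A \<longleftrightarrow> (\<forall>F f. (\<forall>n. F n \<in> A) \<and> asym_conv F f \<longrightarrow> f \<in> A)"

definition asym_contractive :: "('i::finite \<Rightarrow> 'g::linordered_ab_group_add) \<Rightarrow> ('i \<Rightarrow> int)
    \<Rightarrow> ('g \<Rightarrow> complex) set \<Rightarrow> (('g \<Rightarrow> complex) \<Rightarrow> ('g \<Rightarrow> complex)) \<Rightarrow> bool" where
  "asym_contractive \<mu> k0 A J \<longleftrightarrow>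
     (\<forall>f1\<in>A. \<forall>f2\<in>A. \<forall>c. (\<lambda>g. f1 g - f2 g) = fsum \<mu> k0 c \<longrightarrow>
        (\<exists>C. (\<lambda>g. J f1 g - J f2 g) = fsum2 \<mu> k0 (\<lambda>k p. c k * C k p)))"

definition clinear_on :: "('g \<Rightarrow> complex) set \<Rightarrow> (('g \<Rightarrow> complex) \<Rightarrow> ('g \<Rightarrow> complex)) \<Rightarrow> bool" where
  "clinear_on S J \<longleftrightarrow> (\<forall>f\<in>S. \<forall>h\<in>S. \<forall>a b::complex.
      J (\<lambda>g. a * f g + b * h g) = (\<lambda>g. a * J f g + b * J h g))"

end

theory Submission imports Defs begin

lemma zmul_succ: "zmul (n+1) x = zmul n x + x"
proof (cases "0 \<le> n")
  case True
  then have "nat (n+1) = Suc (nat n)" by simp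
  then show ?thesis using True by (simp add: zmul_def)
next
  case False
  then have "nat (-n) = Suc (nat (-(n+1)))" by simp
  then show ?thesis using False by (auto simp add: zmul_def)
qed

lemma zmul_strict_anti:
  fixes x :: "'g::linordered_ab_group_add"
  assumes "x < 0" "a < b" shows "zmul b x < zmul a x"
proof -
  have "\<forall>b. a < b \<longrightarrow> zmul b x < zmul a x"
  proof (intro allI impI)
    fix b assume "a < b"
    then have "a + 1 \<le> b" by simp
    then show "zmul b x < zmul a x"
    proof (induction b rule: int_ge_induct)
      case base then show ?case using zmul_succ[of a x] assms(1) by simp
    next
      case (step i) then show ?case using zmul_succ[of i x] assms(1)
        by (metis add_less_same_cancel1 order.strict_trans)
    qed
  qed
  then show ?thesis using assms(2) by blast
qed

lemma zmul_anti:
  fixes x :: "'g::linordered_ab_group_add"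
  assumes "x < 0" "a \<le> b" shows "zmul b x \<le> zmul a x"
  using zmul_strict_anti[OF assms(1)] assms(2) by (cases "a = b") (auto intro: less_imp_le)

lemma muk_strict:
  assumes "\<forall>i. \<mu> i < 0" "k \<le> k'" "k \<noteq> k'"
  shows "muk \<mu> k' < muk \<mu> k"
proof -
  obtain j where j: "k j \<noteq> k' j" using assms(3) by auto
  then have "k j < k' j" using assms(2) by (simp add: le_fun_def order_less_le)
  show ?thesis unfolding muk_def
  proof (rule sum_strict_mono_ex1)
    show "\<forall>x\<in>UNIV. zmul (k' x) (\<mu> x) \<le> zmul (k x) (\<mu> x)"
      using assms(1,2) by (auto simp: le_fun_def intro!: zmul_anti)
    show "\<exists>a\<in>UNIV. zmul (k' a) (\<mu> a) < zmul (k a) (\<mu> a)"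
      using zmul_strict_anti[OF assms(1)[rule_format, of j] \<open>k j < k' j\<close>] by blast
  qed simp
qed

lemma antichain_finite:
  fixes A :: "('i \<Rightarrow> int) set"
  assumes "finite I" "\<forall>b\<in>A. \<forall>i. k0 i \<le> b i" "\<forall>b\<in>A. \<forall>i. i \<notin> I \<longrightarrow> b i = z i"
    "\<forall>a\<in>A. \<forall>b\<in>A. a \<le> b \<longrightarrow> a = b"
  shows "finite A"
  using assms
proof (induction "card I" arbitrary: I A z rule: less_induct)
  case less
  show ?case
  proof (cases "A = {}")
    case True then show ?thesis by simp
  next
    case False
    then obtain a where a: "a \<in> A" by blast
    define B where "B i v = {b\<in>A. b i = v}" for i v
    have sub: "A \<subseteq> insert a (\<Union>i\<in>I. \<Union>v\<in>{k0 i..<a i}. B i v)"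
    proof
      fix b assume b: "b \<in> A"
      show "b \<in> insert a (\<Union>i\<in>I. \<Union>v\<in>{k0 i..<a i}. B i v)"
      proof (cases "b = a")
        case False
        then have "\<not> a \<le> b" using less.prems(4) a b by blast
        then obtain i where i: "\<not> a i \<le> b i" by (auto simp: le_fun_def)
        then have "i \<in> I" using less.prems(3) a b by (metis order_refl)
        then show ?thesis using i B_def less.prems(2) b by fastforce
      qed simp
    qed
    have fin: "finite (B i v)" if "i \<in> I" for i v
    proof -
      have "card (I - {i}) < card I" using that less.prems(1) by (metis card_Diff1_less)
      then show ?thesis
        apply (rule less.hyps[where z="z(i:=v)"])
        using less.prems that by (auto simp: B_def)
    qed
    show ?thesis using sub fin less.prems(1)
      by (meson finite_UN_I finite_atLeastLessThan_int finite_insert finite_subset)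
  qed
qed

lemma fib_finite:
  assumes "\<forall>i. \<mu> i < 0"
  shows "finite {k. k0 \<le> k \<and> muk \<mu> k = g}"
  apply (rule antichain_finite[of UNIV _ k0])
  using muk_strict[OF assms] by (auto simp: le_fun_def) (metis order_less_irrefl le_fun_def)


definition Lv :: "('i::finite \<Rightarrow> int) \<Rightarrow> ('i \<Rightarrow> int) \<Rightarrow> nat" where
  "Lv k0 k = (\<Sum>i\<in>UNIV. nat (k i - k0 i))"

definition supp_ge :: "('i::finite \<Rightarrow> 'g::linordered_ab_group_add) \<Rightarrow> ('i \<Rightarrow> int) \<Rightarrow> nat
    \<Rightarrow> ('g \<Rightarrow> complex) \<Rightarrow> bool" where
  "supp_ge \<mu> k0 n d \<longleftrightarrow> (\<forall>g. d g \<noteq> 0 \<longrightarrow> (\<exists>k. k0 \<le> k \<and> n \<le> Lv k0 k \<and> muk \<mu> k = g))"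

lemma Lv_strict:
  assumes "k0 \<le> k" "\<forall>i. 0 \<le> p i" "\<exists>i. p i \<noteq> 0"
  shows "Lv k0 k < Lv k0 (\<lambda>i. k i + p i)"
  unfolding Lv_def
proof (rule sum_strict_mono_ex1)
  show "\<forall>x\<in>UNIV. nat (k x - k0 x) \<le> nat (k x + p x - k0 x)"
  proof
    fix x show "nat (k x - k0 x) \<le> nat (k x + p x - k0 x)" using assms(2)[rule_format, of x] by (intro nat_mono) linarith
  qed
  obtain j where "p j \<noteq> 0" using assms(3) by blast
  moreover have "0 \<le> p j" "k0 j \<le> k j" using assms(1,2) by (auto simp: le_fun_def)
  ultimately have "nat (k j - k0 j) < nat (k j + p j - k0 j)" by linarith
  then show "\<exists>a\<in>UNIV. nat (k a - k0 a) < nat (k a + p a - k0 a)" by blast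
qed simp

lemma supp_ge_mono: "supp_ge \<mu> k0 n d \<Longrightarrow> m \<le> n \<Longrightarrow> supp_ge \<mu> k0 m d"
  unfolding supp_ge_def by (meson order_trans)

lemma supp_ge_diff: "supp_ge \<mu> k0 n d1 \<Longrightarrow> supp_ge \<mu> k0 n d2 \<Longrightarrow> supp_ge \<mu> k0 n (\<lambda>g. d1 g - d2 g)"
  unfolding supp_ge_def by (metis diff_zero)

lemma supp_ge_Atilde: "f \<in> Atilde \<mu> k0 \<Longrightarrow> supp_ge \<mu> k0 0 f"
  unfolding supp_ge_def
proof (intro allI impI)
  fix g assume f: "f \<in> Atilde \<mu> k0" and "f g \<noteq> 0"
  then obtain c where "f = fsum \<mu> k0 c" unfolding Atilde_def by blast
  then have "(\<Sum>k | k0 \<le> k \<and> muk \<mu> k = g. c k) \<noteq> 0" using \<open>f g \<noteq> 0\<close> unfolding fsum_def by simp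
  then obtain k where "k \<in> {k. k0 \<le> k \<and> muk \<mu> k = g}" by (meson sum.not_neutral_contains_not_neutral)
  then show "\<exists>k. k0 \<le> k \<and> 0 \<le> Lv k0 k \<and> muk \<mu> k = g" by auto
qed

lemma nice_rep:
  assumes mu: "\<forall>i. \<mu> i < 0" and s: "supp_ge \<mu> k0 n d"
  shows "\<exists>c. d = fsum \<mu> k0 c \<and> (\<forall>k. c k \<noteq> 0 \<longrightarrow> k0 \<le> k \<and> n \<le> Lv k0 k)"
proof -
  define P where "P g k \<longleftrightarrow> k0 \<le> k \<and> n \<le> Lv k0 k \<and> muk \<mu> k = g" for g k
  define c where "c k = (if k0 \<le> k \<and> n \<le> Lv k0 k \<and> k = (SOME k'. P (muk \<mu> k) k') then d (muk \<mu> k) else 0)" for k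
  have "d g = fsum \<mu> k0 c g" for g
  proof (cases "\<exists>k. P g k")
    case True
    define ks where "ks = (SOME k'. P g k')"
    have ks: "P g ks" using True someI_ex ks_def by metis
    have eq: "c k = (if k = ks then d g else 0)" if "k0 \<le> k \<and> muk \<mu> k = g" for k
      using that ks unfolding c_def ks_def P_def by auto
    have "fsum \<mu> k0 c g = (\<Sum>k | k0 \<le> k \<and> muk \<mu> k = g. (if k = ks then d g else 0))"
      unfolding fsum_def by (rule sum.cong) (auto simp: eq)
    also have "\<dots> = d g" using fib_finite[OF mu, of k0 g] ks unfolding P_def by simp
    finally show ?thesis by simp
  next
    case False
    then have "d g = 0" using s unfolding supp_ge_def P_def by blast
    moreover have "c k = 0" if "k0 \<le> k \<and> muk \<mu> k = g" for k
      using False that unfolding c_def P_def by auto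
    ultimately show ?thesis unfolding fsum_def by simp
  qed
  moreover have "\<forall>k. c k \<noteq> 0 \<longrightarrow> k0 \<le> k \<and> n \<le> Lv k0 k" unfolding c_def by auto
  ultimately show ?thesis by blast
qed

lemma contract_step:
  assumes mu: "\<forall>i. \<mu> i < 0" and con: "asym_contractive \<mu> k0 A J"
    and f: "f1 \<in> A" "f2 \<in> A" and s: "supp_ge \<mu> k0 n (\<lambda>g. f1 g - f2 g)"
  shows "supp_ge \<mu> k0 (Suc n) (\<lambda>g. J f1 g - J f2 g)"
proof -
  obtain c where c: "(\<lambda>g. f1 g - f2 g) = fsum \<mu> k0 c" "\<forall>k. c k \<noteq> 0 \<longrightarrow> k0 \<le> k \<and> n \<le> Lv k0 k"
    using nice_rep[OF mu s] by blast
  obtain C where C: "(\<lambda>g. J f1 g - J f2 g) = fsum2 \<mu> k0 (\<lambda>k p. c k * C k p)"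
    using con c(1) f unfolding asym_contractive_def by blast
  show ?thesis unfolding supp_ge_def
  proof (intro allI impI)
    fix g assume "J f1 g - J f2 g \<noteq> 0"
    then have "fsum2 \<mu> k0 (\<lambda>k p. c k * C k p) g \<noteq> 0" using C by metis
    then obtain k p where kp: "k0 \<le> k" "\<forall>i. 0 \<le> p i" "\<exists>i. p i \<noteq> 0" "muk \<mu> (\<lambda>i. k i + p i) = g"
      "c k \<noteq> 0"
    proof -
      obtain x where x: "x \<in> {(k, p). k0 \<le> k \<and> (\<forall>i. 0 \<le> p i) \<and> (\<exists>i. p i \<noteq> 0) \<and> muk \<mu> (\<lambda>i. k i + p i) = g}"
        "(case x of (k, p) \<Rightarrow> c k * C k p) \<noteq> 0"
        using \<open>fsum2 \<mu> k0 (\<lambda>k p. c k * C k p) g \<noteq> 0\<close> unfolding fsum2_def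
        by (meson sum.not_neutral_contains_not_neutral)
      obtain k p where "x = (k, p)" by (cases x)
      then show thesis using that x by auto
    qed
    then have "n \<le> Lv k0 k" using c(2) by auto
    moreover have "Lv k0 k < Lv k0 (\<lambda>i. k i + p i)" using Lv_strict kp by blast
    moreover have "k0 \<le> (\<lambda>i. k i + p i)" using kp(1,2) by (auto simp: le_fun_def add_increasing2)
    ultimately show "\<exists>k. k0 \<le> k \<and> Suc n \<le> Lv k0 k \<and> muk \<mu> k = g" using kp(4) by force
  qed
qed

lemma zero_if_all:
  assumes mu: "\<forall>i. \<mu> i < 0" and s: "\<forall>n. supp_ge \<mu> k0 n d"
  shows "d g = 0"
proof (rule ccontr)
  assume "d g \<noteq> 0"
  have "finite (Lv k0 ` {k. k0 \<le> k \<and> muk \<mu> k = g})" using fib_finite[OF mu] by blast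
  then obtain N where N: "\<forall>x\<in>Lv k0 ` {k. k0 \<le> k \<and> muk \<mu> k = g}. x \<le> N"
    using finite_nat_set_iff_bounded_le by blast
  obtain k where "k0 \<le> k" "Suc N \<le> Lv k0 k" "muk \<mu> k = g"
    using s \<open>d g \<noteq> 0\<close> unfolding supp_ge_def by blast
  then show False using N by force
qed


lemma fib_bound:
  assumes mu: "\<forall>i. \<mu> i < 0"
  shows "\<exists>N. \<forall>k. k0 \<le> k \<and> muk \<mu> k = g \<longrightarrow> Lv k0 k < N"
proof -
  have "finite (Lv k0 ` {k. k0 \<le> k \<and> muk \<mu> k = g})" using fib_finite[OF mu] by blast
  then obtain N where N: "\<forall>x\<in>Lv k0 ` {k. k0 \<le> k \<and> muk \<mu> k = g}. x \<le> N"
    using finite_nat_set_iff_bounded_le by blast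
  then show ?thesis by (intro exI[of _ "Suc N"]) auto
qed

lemma part2:
  assumes mu: "\<forall>i. \<mu> i < 0" and A: "A \<subseteq> Atilde \<mu> k0" "A \<noteq> {}" "asym_closed A" "J ` A \<subseteq> A"
    and con: "asym_contractive \<mu> k0 A J"
  shows "\<exists>!S. S \<in> A \<and> S = J S"
proof -
  have sA: "supp_ge \<mu> k0 0 (\<lambda>g. f1 g - f2 g)" if "f1 \<in> A" "f2 \<in> A" for f1 f2
    using supp_ge_diff[OF supp_ge_Atilde supp_ge_Atilde] that A(1) by blast
  have uniq: "S1 = S2" if "S1 \<in> A" "S1 = J S1" "S2 \<in> A" "S2 = J S2" for S1 S2
  proof -
    have "supp_ge \<mu> k0 n (\<lambda>g. S1 g - S2 g)" for n
    proof (induction n)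
      case 0 then show ?case using sA that by blast
    next
      case (Suc n)
      from contract_step[OF mu con that(1,3) Suc] show ?case using that(2,4)[symmetric] by simp
    qed
    then have "S1 g - S2 g = 0" for g using zero_if_all[OF mu, of k0 "\<lambda>g. S1 g - S2 g" g] by blast
    then show ?thesis by (simp add: fun_eq_iff)
  qed
  obtain S0 where S0: "S0 \<in> A" using A(2) by blast
  define F where "F n = (J ^^ n) S0" for n
  have FS: "F (Suc n) = J (F n)" for n by (simp add: F_def)
  have FA: "F n \<in> A" for n
  proof (induction n)
    case 0 then show ?case using S0 by (simp add: F_def)
  next
    case (Suc n) then show ?case using A(4) FS[of n] by blast
  qed
  have D: "supp_ge \<mu> k0 n (\<lambda>g. F (Suc n) g - F n g)" for n
  proof (induction n)
    case 0 then show ?case using sA FA by blast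
  next
    case (Suc n)
    from contract_step[OF mu con FA FA Suc] show ?case by (simp add: FS)
  qed
  have stab: "\<exists>N. \<forall>m\<ge>N. F m g = F N g" for g
  proof -
    obtain N where N: "\<forall>k. k0 \<le> k \<and> muk \<mu> k = g \<longrightarrow> Lv k0 k < N" using fib_bound[OF mu] by blast
    have st: "F (Suc m) g = F m g" if "m \<ge> N" for m
    proof (rule ccontr)
      assume "F (Suc m) g \<noteq> F m g"
      then obtain k where "k0 \<le> k" "m \<le> Lv k0 k" "muk \<mu> k = g" using D[of m] unfolding supp_ge_def by auto
      then show False using N[rule_format, of k] that by linarith
    qed
    have "F m g = F N g" if "m \<ge> N" for m
      using that by (induction m rule: dec_induct) (auto simp: st)
    then show ?thesis by blast
  qed
  define Nb where "Nb g = (SOME N. \<forall>m\<ge>N. F m g = F N g)" for g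
  have Nb: "\<forall>m\<ge>Nb g. F m g = F (Nb g) g" for g unfolding Nb_def by (rule someI_ex[OF stab])
  define f where "f g = F (Nb g) g" for g
  have conv: "asym_conv F f" unfolding asym_conv_def
  proof
    fix g show "\<exists>N. \<forall>n\<ge>N. F n g = f g" using Nb[of g] unfolding f_def by blast
  qed
  have "\<forall>F f. (\<forall>n. F n \<in> A) \<and> asym_conv F f \<longrightarrow> f \<in> A" using A(3) unfolding asym_closed_def .
  then have fA: "f \<in> A" using conv FA by blast
  have jump: "\<exists>j\<ge>n. F (Suc j) g \<noteq> F j g" if "n \<le> m" "F m g \<noteq> F n g" for n m g
    using that
  proof (induction m rule: dec_induct)
    case base then show ?case by simp
  next
    case (step m)
    show ?case
    proof (cases "F (Suc m) g = F m g")
      case True then show ?thesis using step by simp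
    next
      case False then show ?thesis using step(1) by blast
    qed
  qed
  have fF: "supp_ge \<mu> k0 n (\<lambda>g. f g - F n g)" for n
    unfolding supp_ge_def
  proof (intro allI impI)
    fix g assume "f g - F n g \<noteq> 0"
    moreover have "F (max n (Nb g)) g = F (Nb g) g" by (rule Nb[rule_format]) simp
    then have "f g = F (max n (Nb g)) g" unfolding f_def by (rule sym)
    ultimately obtain j where j: "j \<ge> n" "F (Suc j) g \<noteq> F j g"
      using jump[of n "max n (Nb g)" g] by auto
    then obtain k where "k0 \<le> k" "j \<le> Lv k0 k" "muk \<mu> k = g" using D[of j] unfolding supp_ge_def by auto
    then show "\<exists>k. k0 \<le> k \<and> n \<le> Lv k0 k \<and> muk \<mu> k = g" using j(1) le_trans by blast
  qed
  have "supp_ge \<mu> k0 (Suc n) (\<lambda>g. f g - J f g)" for n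
  proof -
    have a: "supp_ge \<mu> k0 (Suc n) (\<lambda>g. J f g - F (Suc n) g)"
      using contract_step[OF mu con fA FA fF[of n]] by (simp add: FS)
    from supp_ge_diff[OF fF[of "Suc n"] a] show ?thesis by simp
  qed
  then have "\<forall>n. supp_ge \<mu> k0 n (\<lambda>g. f g - J f g)" by (meson le_SucI order_refl supp_ge_mono)
  then have "f g - J f g = 0" for g using zero_if_all[OF mu, of k0 "\<lambda>g. f g - J f g" g] by blast
  then have "f = J f" by (simp add: fun_eq_iff)
  then show ?thesis using fA uniq by blast
qed


lemma fsum_add: "(\<lambda>g. fsum \<mu> k0 c1 g + fsum \<mu> k0 c2 g) = fsum \<mu> k0 (\<lambda>k. c1 k + c2 k)"
  unfolding fsum_def by (simp add: sum.distrib)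

lemma Atilde_closed:
  assumes mu: "\<forall>i. \<mu> i < 0"
  shows "asym_closed (Atilde \<mu> k0)"
  unfolding asym_closed_def
proof (intro allI impI)
  fix F f assume a: "(\<forall>n. F n \<in> Atilde \<mu> k0) \<and> asym_conv F f"
  have "supp_ge \<mu> k0 0 f" unfolding supp_ge_def
  proof (intro allI impI)
    fix g assume "f g \<noteq> 0"
    obtain N where "\<forall>n\<ge>N. F n g = f g" using a unfolding asym_conv_def by blast
    then have "F N g \<noteq> 0" using \<open>f g \<noteq> 0\<close> by simp
    then show "\<exists>k. k0 \<le> k \<and> 0 \<le> Lv k0 k \<and> muk \<mu> k = g"
      using supp_ge_Atilde[of "F N"] a unfolding supp_ge_def by blast
  qed
  then show "f \<in> Atilde \<mu> k0" using nice_rep[OF mu] unfolding Atilde_def by blast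
qed

lemma part1:
  assumes mu: "\<forall>i. \<mu> i < 0"
    and J: "J ` Atilde \<mu> k0 \<subseteq> Atilde \<mu> k0" "clinear_on (Atilde \<mu> k0) J"
      "\<exists>C. \<forall>c. J (fsum \<mu> k0 c) = fsum2 \<mu> k0 (\<lambda>j p. c j * C j p)"
    and S0: "S0 \<in> Atilde \<mu> k0"
  shows "\<exists>!S. S \<in> Atilde \<mu> k0 \<and> S = (\<lambda>g. J S g + S0 g)"
proof -
  define T where "T S = (\<lambda>g. J S g + S0 g)" for S
  obtain C where C: "\<forall>c. J (fsum \<mu> k0 c) = fsum2 \<mu> k0 (\<lambda>j p. c j * C j p)" using J(3) by blast
  have ne: "Atilde \<mu> k0 \<noteq> {}" unfolding Atilde_def by blast
  have TA: "T ` Atilde \<mu> k0 \<subseteq> Atilde \<mu> k0"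
  proof
    fix x assume "x \<in> T ` Atilde \<mu> k0"
    then obtain S where S: "S \<in> Atilde \<mu> k0" "x = T S" by blast
    then have "J S \<in> Atilde \<mu> k0" using J(1) by blast
    then obtain c1 where "J S = fsum \<mu> k0 c1" unfolding Atilde_def by blast
    moreover obtain c2 where "S0 = fsum \<mu> k0 c2" using S0 unfolding Atilde_def by blast
    ultimately have "x = fsum \<mu> k0 (\<lambda>k. c1 k + c2 k)" using S(2) fsum_add[of \<mu> k0 c1 c2] unfolding T_def by simp
    then show "x \<in> Atilde \<mu> k0" unfolding Atilde_def by blast
  qed
  have con: "asym_contractive \<mu> k0 (Atilde \<mu> k0) T"
    unfolding asym_contractive_def
  proof (intro ballI allI impI)
    fix f1 f2 c assume f: "f1 \<in> Atilde \<mu> k0" "f2 \<in> Atilde \<mu> k0" and d: "(\<lambda>g. f1 g - f2 g) = fsum \<mu> k0 c"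
    have "J (\<lambda>g. 1 * f1 g + (-1) * f2 g) = (\<lambda>g. 1 * J f1 g + (-1) * J f2 g)"
      using J(2) f unfolding clinear_on_def by blast
    then have "J (\<lambda>g. f1 g - f2 g) = (\<lambda>g. J f1 g - J f2 g)" by simp
    then have "(\<lambda>g. T f1 g - T f2 g) = fsum2 \<mu> k0 (\<lambda>k p. c k * C k p)"
      using C d unfolding T_def by simp
    then show "\<exists>C. (\<lambda>g. T f1 g - T f2 g) = fsum2 \<mu> k0 (\<lambda>k p. c k * C k p)" by blast
  qed
  show ?thesis using part2[OF mu order_refl ne Atilde_closed[OF mu] TA con] unfolding T_def .
qed

theorem mainTheorem6:
  fixes \<mu> :: "'i::finite \<Rightarrow> 'g::linordered_ab_group_add"
    and k0 :: "'i \<Rightarrow> int"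
  assumes "\<forall>i. \<mu> i < 0"
  shows "(\<forall>J. J ` Atilde \<mu> k0 \<subseteq> Atilde \<mu> k0 \<and> clinear_on (Atilde \<mu> k0) J \<and>
            (\<exists>C. \<forall>c. J (fsum \<mu> k0 c) = fsum2 \<mu> k0 (\<lambda>j p. c j * C j p)) \<longrightarrow>
            (\<forall>S0\<in>Atilde \<mu> k0. \<exists>!S. S \<in> Atilde \<mu> k0 \<and> S = (\<lambda>g. J S g + S0 g)))
       \<and> (\<forall>A J. A \<subseteq> Atilde \<mu> k0 \<and> A \<noteq> {} \<and> asym_closed A \<and> J ` A \<subseteq> A \<and>
            asym_contractive \<mu> k0 A J \<longrightarrow> (\<exists>!S. S \<in> A \<and> S = J S))"
proof (intro conjI allI impI ballI)
  fix J S0 assume "J ` Atilde \<mu> k0 \<subseteq> Atilde \<mu> k0 \<and> clinear_on (Atilde \<mu> k0) J \<and>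
            (\<exists>C. \<forall>c. J (fsum \<mu> k0 c) = fsum2 \<mu> k0 (\<lambda>j p. c j * C j p))" "S0 \<in> Atilde \<mu> k0"
  then show "\<exists>!S. S \<in> Atilde \<mu> k0 \<and> S = (\<lambda>g. J S g + S0 g)"
    using part1[OF assms, of J k0 S0] by (elim conjE)
next
  fix A J assume "A \<subseteq> Atilde \<mu> k0 \<and> A \<noteq> {} \<and> asym_closed A \<and> J ` A \<subseteq> A \<and> asym_contractive \<mu> k0 A J"
  then show "\<exists>!S. S \<in> A \<and> S = J S" using part2[OF assms, of A k0 J] by (elim conjE)
qed

end
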